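(* Let $p_1,\dots,p_k$ be mutually orthogonal primitive idempotents in a finite-dimensional formally real Jordan algebra $A$ with unit $u$. Then the restriction of $\exp_u\colon(A,\|\cdot\|_u)\to(A_+^\circ,d_T)$, $x\mapsto e^x$, to $\mathrm{Span}\{p_1,\dots,p_k\}$ is an isometry. Moreover, if $x,w\in\mathrm{Span}\{p_1,\dots,p_k\}$ with $\|w\|_u=1$, then $t\mapsto e^{tw+x}$, $t\in\mathbb{R}$, is a geodesic path in $(A_+^\circ,d_T)$, i.e. $d_T(e^{tw+x},e^{sw+x})=|t-s|$ for all $s,t\in\mathbb{R}$.
   Context: $A$: finite-dimensional real vector space with commutative bilinear product $\bullet$ satisfying $x^2\bullet(x\bullet y)=x\bullet(x^2\bullet y)$, formally real, with unit $u$. $A_+=\{x^2\}$, $A_+^\circ$ its interior, $x\le y$ iff $y-x\in A_+$. Idempotents $p,q$ are orthogonal if $p\bullet q=0$; spectral decomposition $x=\sum_i\lambda_ip_i$ over a Jordan frame, $\sigma(x)=\{\lambda_i\}$, $e^x=\sum_ie^{\lambda_i}p_i$. $\|x\|_u=\max\{|\lambda|:\lambda\in\sigma(x)\}$. For $x\in A$, $y\in A_+^\circ$, $M(x/y)=\inf\{\beta:x\le\beta y\}$; $d_T(x,y)=\max\{\log M(x/y),\log M(y/x)\}$ for $x,y\in A_+^\circ$ (equivalently $d_T(x,y)=\|\log U_{y^{-1/2}}x\|_u$, with $U_zv=2z\bullet(z\bullet v)-z^2\bullet v$). *)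

theory Defs
  imports "HOL-Analysis.Analysis"
begin

definition jsq :: "('a \<Rightarrow> 'a \<Rightarrow> 'a) \<Rightarrow> 'a \<Rightarrow> 'a" where
  "jsq jm x = jm x x"

definition EJA :: "('a::euclidean_space \<Rightarrow> 'a \<Rightarrow> 'a) \<Rightarrow> 'a \<Rightarrow> bool" where
  "EJA jm u \<longleftrightarrow>
     bilinear jm
   \<and> (\<forall>x y. jm x y = jm y x)
   \<and> (\<forall>x y. jm (jsq jm x) (jm x y) = jm x (jm (jsq jm x) y))
   \<and> (\<forall>(n::nat) (x::nat \<Rightarrow> 'a). (\<Sum>i<n. jsq jm (x i)) = 0 \<longrightarrow> (\<forall>i<n. x i = 0))
   \<and> (\<forall>x. jm u x = x)"

definition idempotent :: "('a::real_vector \<Rightarrow> 'a \<Rightarrow> 'a) \<Rightarrow> 'a \<Rightarrow> bool" where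
  "idempotent jm p \<longleftrightarrow> jm p p = p"

definition primitive_idem :: "('a::real_vector \<Rightarrow> 'a \<Rightarrow> 'a) \<Rightarrow> 'a \<Rightarrow> bool" where
  "primitive_idem jm p \<longleftrightarrow> idempotent jm p \<and> p \<noteq> 0 \<and>
     \<not> (\<exists>q r. idempotent jm q \<and> idempotent jm r \<and> q \<noteq> 0 \<and> r \<noteq> 0
              \<and> jm q r = 0 \<and> p = q + r)"

definition jordan_frame :: "('a::real_vector \<Rightarrow> 'a \<Rightarrow> 'a) \<Rightarrow> 'a \<Rightarrow> nat \<Rightarrow> (nat \<Rightarrow> 'a) \<Rightarrow> bool" where
  "jordan_frame jm u n c \<longleftrightarrow>
     (\<forall>i<n. primitive_idem jm (c i))
   \<and> (\<forall>i<n. \<forall>j<n. i \<noteq> j \<longrightarrow> jm (c i) (c j) = 0)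
   \<and> (\<Sum>i<n. c i) = u"

definition jspec :: "('a::real_vector \<Rightarrow> 'a \<Rightarrow> 'a) \<Rightarrow> 'a \<Rightarrow> 'a \<Rightarrow> real set" where
  "jspec jm u x = {\<mu>. \<exists>n c l. jordan_frame jm u n c \<and> x = (\<Sum>i<n. l i *\<^sub>R c i)
                              \<and> (\<exists>i<n. l i = \<mu>)}"

definition unorm :: "('a::real_vector \<Rightarrow> 'a \<Rightarrow> 'a) \<Rightarrow> 'a \<Rightarrow> 'a \<Rightarrow> real" where
  "unorm jm u x = Max (abs ` jspec jm u x)"

definition jexp :: "('a::real_vector \<Rightarrow> 'a \<Rightarrow> 'a) \<Rightarrow> 'a \<Rightarrow> 'a \<Rightarrow> 'a" where
  "jexp jm u x = (THE y. \<exists>n c l. jordan_frame jm u n c \<and> x = (\<Sum>i<n. l i *\<^sub>R c i)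
                              \<and> y = (\<Sum>i<n. exp (l i) *\<^sub>R c i))"

definition jcone :: "('a \<Rightarrow> 'a \<Rightarrow> 'a) \<Rightarrow> 'a set" where
  "jcone jm = {jsq jm z | z. True}"

definition jle :: "('a::real_vector \<Rightarrow> 'a \<Rightarrow> 'a) \<Rightarrow> 'a \<Rightarrow> 'a \<Rightarrow> bool" where
  "jle jm x y \<longleftrightarrow> y - x \<in> jcone jm"

definition Mfun :: "('a::real_vector \<Rightarrow> 'a \<Rightarrow> 'a) \<Rightarrow> 'a \<Rightarrow> 'a \<Rightarrow> real" where
  "Mfun jm x y = Inf {\<beta>. jle jm x (\<beta> *\<^sub>R y)}"

definition dT :: "('a::real_vector \<Rightarrow> 'a \<Rightarrow> 'a) \<Rightarrow> 'a \<Rightarrow> 'a \<Rightarrow> real" where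
  "dT jm x y = max (ln (Mfun jm x y)) (ln (Mfun jm y x))"

end

theory Submission
  imports Defs
begin


primrec pw :: "('a::real_vector \<Rightarrow> 'a \<Rightarrow> 'a) \<Rightarrow> 'a \<Rightarrow> 'a \<Rightarrow> nat \<Rightarrow> 'a" where
  "pw jm u z 0 = u" | "pw jm u z (Suc n) = jm z (pw jm u z n)"

definition ofam :: "('a::real_vector \<Rightarrow> 'a \<Rightarrow> 'a) \<Rightarrow> 'a \<Rightarrow> nat \<Rightarrow> (nat \<Rightarrow> 'a) \<Rightarrow> bool" where
  "ofam jm u n c \<longleftrightarrow> (\<forall>i<n. jm (c i) (c i) = c i) \<and> (\<forall>i<n. \<forall>j<n. i \<noteq> j \<longrightarrow> jm (c i) (c j) = 0)
     \<and> (\<Sum>i<n. c i) = u"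

primrec cf :: "real \<Rightarrow> real list \<Rightarrow> real \<Rightarrow> real" where
  "cf m [] t = 1" | "cf m (l # ls) t = (t - l) / (m - l) * cf m ls t"

primrec Ev :: "('a::real_vector \<Rightarrow> 'a \<Rightarrow> 'a) \<Rightarrow> 'a \<Rightarrow> 'a \<Rightarrow> real \<Rightarrow> real list \<Rightarrow> 'a" where
  "Ev jm u x m [] = u"
| "Ev jm u x m (l # ls) = (1 / (m - l)) *\<^sub>R (jm x (Ev jm u x m ls) - l *\<^sub>R Ev jm u x m ls)"

lemma cf_zero: "t \<in> set ls \<Longrightarrow> cf m ls t = 0"
  by (induction ls) auto

lemma cf_one: "m \<notin> set ls \<Longrightarrow> cf m ls m = 1"
  by (induction ls) auto

lemma regroup:
  fixes c :: "nat \<Rightarrow> 'a::real_vector"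
  assumes "finite S" "\<forall>i<n. l i \<in> S"
  shows "(\<Sum>i<n. g (l i) *\<^sub>R c i) = (\<Sum>m\<in>S. g m *\<^sub>R (\<Sum>i<n. if l i = m then c i else 0))"
proof -
  have "(\<Sum>m\<in>S. g m *\<^sub>R (\<Sum>i<n. if l i = m then c i else 0))
      = (\<Sum>m\<in>S. \<Sum>i<n. if l i = m then g (l i) *\<^sub>R c i else 0)"
    by (simp add: scaleR_sum_right if_distrib cong: if_cong)
  also have "\<dots> = (\<Sum>i<n. \<Sum>m\<in>S. if l i = m then g (l i) *\<^sub>R c i else 0)"
    by (rule sum.swap)
  also have "\<dots> = (\<Sum>i<n. g (l i) *\<^sub>R c i)"
    using assms by (simp add: sum.delta)
  finally show ?thesis by simp
qed

locale eja =
  fixes jm :: "'a::euclidean_space \<Rightarrow> 'a \<Rightarrow> 'a" and u :: 'a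
  assumes E: "EJA jm u"
begin

lemma bil: "bilinear jm" using E by (simp add: EJA_def)
lemma comm: "jm x y = jm y x" using E by (simp add: EJA_def)
lemma jordan: "jm (jm x x) (jm x y) = jm x (jm (jm x x) y)" using E by (simp add: EJA_def jsq_def)
lemma unitl[simp]: "jm u x = x" using E by (simp add: EJA_def)
lemma unitr[simp]: "jm x u = x" using comm unitl by metis

lemmas bsimps[simp] = bilinear_ladd[OF bil] bilinear_radd[OF bil] bilinear_lmul[OF bil] bilinear_rmul[OF bil]
  bilinear_lneg[OF bil] bilinear_rneg[OF bil] bilinear_lsub[OF bil] bilinear_rsub[OF bil]
  bilinear_lzero[OF bil] bilinear_rzero[OF bil]

lemma lin3:
  "jm (jm a b) (jm c w) + jm (jm b c) (jm a w) + jm (jm c a) (jm b w)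
   = jm c (jm (jm a b) w) + jm a (jm (jm b c) w) + jm b (jm (jm c a) w)"
proof -
  define T where "T x = jm (jm x x) (jm x w) - jm x (jm (jm x x) w)" for x
  have T0: "T x = 0" for x unfolding T_def using jordan by simp
  have "T (a+b+c) - T (a+b) - T (a+c) - T (b+c) + T a + T b + T c = 0" by (simp add: T0)
  then have "2 *\<^sub>R (jm (jm a b) (jm c w) + jm (jm b c) (jm a w) + jm (jm c a) (jm b w)
   - (jm c (jm (jm a b) w) + jm a (jm (jm b c) w) + jm b (jm (jm c a) w))) = 0"
    unfolding T_def by (simp add: algebra_simps comm[of b a] comm[of c a] comm[of c b] scaleR_2)
  then show ?thesis by simp
qed

lemma peirceK:
  assumes e: "jm e e = e" and f: "jm f f = f" and ef: "jm e f = 0" and a: "jm e a = a"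
  shows "jm f a = 0"
proof -
  have fe: "jm f e = 0" using ef comm by metis
  have com: "jm e (jm f t) = jm f (jm e t)" for t
    using lin3[of e e f t] by (simp add: e ef fe)
  have l2: "jm (jm f t) e = jm e (jm (jm f t) e) + jm f (jm (jm t e) e)" for t
    using lin3[of e f t e] by (simp add: e ef fe)
  have ae: "jm a e = a" using a comm by metis
  have 1: "jm (jm f a) e = jm f a" using com[of a] a comm by metis
  have 2: "jm e (jm (jm f a) e) = jm f a" using 1 com[of a] a by simp
  have "jm f a = jm f a + jm f a" using l2[of a] 1 2 ae by simp
  then show ?thesis by simp
qed

abbreviation P where "P z n \<equiv> pw jm u z n"

lemma pw1[simp]: "P z 1 = z" by simp
lemma pw2: "P z 2 = jm z z" by (simp add: numeral_2_eq_2)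

lemma pw_rec: "jm (P z (n+2)) t = 2 *\<^sub>R jm (P z (n+1)) (jm z t) + jm (jm z z) (jm (P z n) t)
   - jm (P z n) (jm z (jm z t)) - jm z (jm z (jm (P z n) t))"
proof -
  have a: "jm (P z n) z = P z (n+1)" by (simp add: comm)
  have b: "jm (P z (n+1)) z = P z (n+2)" by (simp add: comm)
  have "jm (jm (P z n) z) (jm t z) + jm (jm z t) (jm (P z n) z) + jm (jm t (P z n)) (jm z z)
   = jm t (jm (jm (P z n) z) z) + jm (P z n) (jm (jm z t) z) + jm z (jm (jm t (P z n)) z)"
    by (rule lin3)
  then have "jm (P z (n+1)) (jm z t) + jm (P z (n+1)) (jm z t) + jm (jm z z) (jm (P z n) t)
   = jm (P z (n+2)) t + jm (P z n) (jm z (jm z t)) + jm z (jm z (jm (P z n) t))"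
    unfolding a b by (metis comm)
  then show ?thesis by (simp add: algebra_simps scaleR_2)
qed

lemma jord': "jm (jm z z) (jm z y) = jm z (jm (jm z z) y)" by (rule jordan)

lemma pw_comm: "jm (P z n) (jm z v) = jm z (jm (P z n) v) \<and> jm (P z n) (jm (jm z z) v) = jm (jm z z) (jm (P z n) v)"
proof (induction n arbitrary: v rule: less_induct)
  case (less n)
  show ?case
  proof (cases "n < 2")
    case True
    then have "n = 0 \<or> n = 1" by auto
    then show ?thesis using jord' by auto
  next
    case False
    then obtain m where n: "n = m + 2" by (metis add.commute le_Suc_ex not_less)
    have I1: "jm (P z (m+1)) (jm z y) = jm z (jm (P z (m+1)) y)" for y using less[of "m+1"] n by auto
    have I1': "jm (P z (m+1)) (jm (jm z z) y) = jm (jm z z) (jm (P z (m+1)) y)" for y using less[of "m+1"] n by auto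
    note I1 = I1[simplified] and I1' = I1'[simplified]
    have I0: "jm (P z m) (jm z y) = jm z (jm (P z m) y)" for y using less[of "m"] n by auto
    have I0': "jm (P z m) (jm (jm z z) y) = jm (jm z z) (jm (P z m) y)" for y using less[of "m"] n by auto
    have A: "jm (P z (m+2)) (jm z v) = jm z (jm (P z (m+2)) v)"
      unfolding pw_rec
      by (simp add: I1 I0 jord')
    have B: "jm (P z (m+2)) (jm (jm z z) v) = jm (jm z z) (jm (P z (m+2)) v)"
      unfolding pw_rec
      by (simp add: I1 I1' I0 I0' jord' flip: jord')
    show ?thesis using A B n by simp
  qed
qed


lemma pw_add: "jm (P z m) (P z n) = P z (m+n)"
proof (induction n)
  case 0 then show ?case by simp
next
  case (Suc n)
  have "jm (P z m) (P z (Suc n)) = jm z (jm (P z m) (P z n))"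
    using pw_comm[of z m "P z n"] by simp
  then show ?case using Suc by simp
qed

definition PA where "PA z = span (range (P z))"

lemma PA_pw[simp]: "P z n \<in> PA z" unfolding PA_def by (simp add: span_base)

lemma PA_closed: assumes "x \<in> PA z" "y \<in> PA z" shows "jm x y \<in> PA z"
proof -
  have g: "jm (P z m) y \<in> PA z" for m
    using assms(2) unfolding PA_def
  proof (induction y rule: span_induct_alt)
    case base then show ?case by (simp add: span_zero)
  next
    case (step c x y)
    then obtain n where "x = P z n" by auto
    then show ?case using step pw_add by (simp add: span_add span_scale span_base)
  qed
  show ?thesis using assms(1) unfolding PA_def
  proof (induction x rule: span_induct_alt)
    case base then show ?case by (simp add: span_zero)
  next
    case (step c x y)
    then obtain n where "x = P z n" by auto
    then show ?case using step g unfolding PA_def by (simp add: span_add span_scale)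
  qed
qed

lemma PA_assoc: assumes "x \<in> PA z" "y \<in> PA z" "w \<in> PA z" shows "jm (jm x y) w = jm x (jm y w)"
proof -
  have g1: "jm (jm (P z a) (P z b)) w = jm (P z a) (jm (P z b) w)" for a b
    using assms(3) unfolding PA_def
  proof (induction w rule: span_induct_alt)
    case base then show ?case by simp
  next
    case (step c x y)
    then obtain n where "x = P z n" by auto
    then show ?case using step by (simp add: pw_add add.assoc)
  qed
  have g2: "jm (jm (P z a) y) w = jm (P z a) (jm y w)" for a
    using assms(2) unfolding PA_def
  proof (induction y rule: span_induct_alt)
    case base then show ?case by simp
  next
    case (step c x y)
    then obtain n where "x = P z n" by auto
    then show ?case using step g1 by simp
  qed
  show ?thesis
    using assms(1) unfolding PA_def
  proof (induction x rule: span_induct_alt)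
    case base then show ?case by simp
  next
    case (step c x y)
    then obtain n where "x = P z n" by auto
    then show ?case using step g2 by simp
  qed
qed


lemma jm_sumr: "jm x (sum f S) = (\<Sum>i\<in>S. jm x (f i))"
proof -
  have "linear (jm x)" using bil by (simp add: bilinear_def)
  then show ?thesis by (simp add: linear_sum)
qed

lemma jm_suml: "jm (sum f S) x = (\<Sum>i\<in>S. jm (f i) x)"
  using jm_sumr[of x f S] comm by simp

lemma jm_single:
  fixes c :: "nat \<Rightarrow> 'a"
  assumes "\<forall>i<n. jm (c i) (c i) = c i" "\<forall>i<n. \<forall>j<n. i \<noteq> j \<longrightarrow> jm (c i) (c j) = 0" "j < n"
  shows "jm (c j) (\<Sum>i<n. b i *\<^sub>R c i) = b j *\<^sub>R c j"
proof -
  have "jm (c j) (\<Sum>i<n. b i *\<^sub>R c i) = (\<Sum>i<n. if i = j then b i *\<^sub>R c i else 0)"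
    unfolding jm_sumr using assms by (intro sum.cong) auto
  also have "\<dots> = b j *\<^sub>R c j" using assms(3) by (subst sum.delta) auto
  finally show ?thesis .
qed

lemma fmul:
  fixes c :: "nat \<Rightarrow> 'a"
  assumes "\<forall>i<n. jm (c i) (c i) = c i" "\<forall>i<n. \<forall>j<n. i \<noteq> j \<longrightarrow> jm (c i) (c j) = 0"
  shows "jm (\<Sum>i<n. a i *\<^sub>R c i) (\<Sum>i<n. b i *\<^sub>R c i) = (\<Sum>i<n. (a i * b i) *\<^sub>R c i)"
  unfolding jm_suml using jm_single[OF assms] by (intro sum.cong) auto

lemma Ev_frame:
  assumes "ofam jm u n c" "x = (\<Sum>i<n. l i *\<^sub>R c i)"
  shows "Ev jm u x m ls = (\<Sum>i<n. cf m ls (l i) *\<^sub>R c i)"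
proof (induction ls)
  case Nil then show ?case using assms by (simp add: ofam_def)
next
  case (Cons a ls)
  have o: "\<forall>i<n. jm (c i) (c i) = c i" "\<forall>i<n. \<forall>j<n. i \<noteq> j \<longrightarrow> jm (c i) (c j) = 0"
    using assms(1) by (auto simp: ofam_def)
  have "Ev jm u x m (a # ls) = (1 / (m - a)) *\<^sub>R ((\<Sum>i<n. (l i * cf m ls (l i)) *\<^sub>R c i) - a *\<^sub>R (\<Sum>i<n. cf m ls (l i) *\<^sub>R c i))"
    using Cons fmul[OF o] assms(2) by simp
  also have "\<dots> = (\<Sum>i<n. cf m (a # ls) (l i) *\<^sub>R c i)"
    by (simp add: scaleR_sum_right sum_subtractf[symmetric] algebra_simps diff_divide_distrib)
  finally show ?case .
qed

lemma proj_eq: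
  assumes "ofam jm u n c" "x = (\<Sum>i<n. l i *\<^sub>R c i)"
    "ofam jm u n' c'" "x = (\<Sum>i<n'. l' i *\<^sub>R c' i)"
  shows "(\<Sum>i<n. if l i = m then c i else 0) = (\<Sum>i<n'. if l' i = m then c' i else 0)"
proof -
  define S where "S = (l ` {..<n} \<union> l' ` {..<n'}) - {m}"
  define ls where "ls = sorted_list_of_set S"
  have sl: "set ls = S" unfolding ls_def S_def by simp
  have "Ev jm u x m ls = (\<Sum>i<n. if l i = m then c i else 0)"
    unfolding Ev_frame[OF assms(1,2)]
    by (intro sum.cong) (auto simp: cf_zero cf_one sl S_def)
  moreover have "Ev jm u x m ls = (\<Sum>i<n'. if l' i = m then c' i else 0)"
    unfolding Ev_frame[OF assms(3,4)]
    by (intro sum.cong) (auto simp: cf_zero cf_one sl S_def)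
  ultimately show ?thesis by simp
qed

lemma fun_eq:
  assumes "ofam jm u n c" "x = (\<Sum>i<n. l i *\<^sub>R c i)"
    "ofam jm u n' c'" "x = (\<Sum>i<n'. l' i *\<^sub>R c' i)"
  shows "(\<Sum>i<n. g (l i) *\<^sub>R c i) = (\<Sum>i<n'. g (l' i) *\<^sub>R c' i)"
proof -
  define S where "S = l ` {..<n} \<union> l' ` {..<n'}"
  have "(\<Sum>i<n. g (l i) *\<^sub>R c i) = (\<Sum>m\<in>S. g m *\<^sub>R (\<Sum>i<n. if l i = m then c i else 0))"
    by (rule regroup) (auto simp: S_def)
  also have "\<dots> = (\<Sum>m\<in>S. g m *\<^sub>R (\<Sum>i<n'. if l' i = m then c' i else 0))"
    using proj_eq[OF assms] by simp
  also have "\<dots> = (\<Sum>i<n'. g (l' i) *\<^sub>R c' i)"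
    by (rule regroup[symmetric]) (auto simp: S_def)
  finally show ?thesis .
qed

lemma jf_ofam: "jordan_frame jm u n c \<Longrightarrow> ofam jm u n c"
  by (auto simp: jordan_frame_def ofam_def primitive_idem_def idempotent_def)

lemma jexp_frame:
  assumes "jordan_frame jm u n c" "x = (\<Sum>i<n. l i *\<^sub>R c i)"
  shows "jexp jm u x = (\<Sum>i<n. exp (l i) *\<^sub>R c i)"
  unfolding jexp_def
proof (rule the_equality)
  show "\<exists>n' c' l'. jordan_frame jm u n' c' \<and> x = (\<Sum>i<n'. l' i *\<^sub>R c' i) \<and> (\<Sum>i<n. exp (l i) *\<^sub>R c i) = (\<Sum>i<n'. exp (l' i) *\<^sub>R c' i)"
    using assms by blast
next
  fix y assume "\<exists>n' c' l'. jordan_frame jm u n' c' \<and> x = (\<Sum>i<n'. l' i *\<^sub>R c' i) \<and> y = (\<Sum>i<n'. exp (l' i) *\<^sub>R c' i)"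
  then obtain n' c' l' where "jordan_frame jm u n' c'" "x = (\<Sum>i<n'. l' i *\<^sub>R c' i)" "y = (\<Sum>i<n'. exp (l' i) *\<^sub>R c' i)"
    by blast
  then show "y = (\<Sum>i<n. exp (l i) *\<^sub>R c i)"
    using fun_eq[OF jf_ofam[OF assms(1)] assms(2) jf_ofam] by metis
qed

lemma jspec_frame:
  assumes "jordan_frame jm u n c" "x = (\<Sum>i<n. l i *\<^sub>R c i)"
  shows "jspec jm u x = l ` {..<n}"
proof
  show "l ` {..<n} \<subseteq> jspec jm u x" using assms unfolding jspec_def by blast
next
  show "jspec jm u x \<subseteq> l ` {..<n}"
  proof
    fix m assume "m \<in> jspec jm u x"
    then obtain n' c' l' j where fr: "jordan_frame jm u n' c'" and x': "x = (\<Sum>i<n'. l' i *\<^sub>R c' i)"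
      and j: "j < n'" "l' j = m" unfolding jspec_def by blast
    show "m \<in> l ` {..<n}"
    proof (rule ccontr)
      assume nm: "m \<notin> l ` {..<n}"
      have "(\<Sum>i<n'. if l' i = m then c' i else 0) = (\<Sum>i<n. if l i = m then c i else 0)"
        using proj_eq[OF jf_ofam[OF fr] x' jf_ofam[OF assms(1)] assms(2)] by simp
      also have "\<dots> = 0" using nm by (intro sum.neutral) auto
      finally have z0: "(\<Sum>i<n'. if l' i = m then c' i else 0) = 0" .
      have "(\<Sum>i<n'. (if l' i = m then 1 else 0) *\<^sub>R c' i) = (\<Sum>i<n'. if l' i = m then c' i else 0)"
        by (intro sum.cong) auto
      with z0 have z: "(\<Sum>i<n'. (if l' i = m then 1 else 0) *\<^sub>R c' i) = 0" by simp
      have o: "\<forall>i<n'. jm (c' i) (c' i) = c' i" "\<forall>i<n'. \<forall>j<n'. i \<noteq> j \<longrightarrow> jm (c' i) (c' j) = 0"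
        using jf_ofam[OF fr] by (auto simp: ofam_def)
      have "c' j = 0" using jm_single[OF o j(1), of "\<lambda>i. if l' i = m then 1 else 0"] z j by simp
      then show False using fr j unfolding jordan_frame_def primitive_idem_def by auto
    qed
  qed
qed


lemma freal2: assumes "jm y y + jm w w = 0" shows "w = 0"
proof -
  define x where "x = (\<lambda>i::nat. if i = 0 then y else w)"
  have "(\<Sum>i<2. jsq jm (x i)) = 0" using assms by (simp add: x_def jsq_def numeral_2_eq_2)
  then have "\<forall>i<2. x i = 0" using E unfolding EJA_def by blast
  then show ?thesis by (auto simp: x_def dest: spec[of _ 1])
qed

lemma PA_sub: "x \<in> PA z \<Longrightarrow> y \<in> PA z \<Longrightarrow> x - y \<in> PA z" "x \<in> PA z \<Longrightarrow> r *\<^sub>R x \<in> PA z"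
  unfolding PA_def by (auto intro: span_diff span_scale)

lemma Ev_PA: "x \<in> PA z \<Longrightarrow> Ev jm u x m ls \<in> PA z"
proof (induction ls)
  case Nil then show ?case using PA_pw[of z 0] by simp
next
  case (Cons a ls) then show ?case by (simp add: PA_sub PA_closed)
qed

lemma cone_frame:
  assumes o: "ofam jm u n c" and nz: "\<forall>i<n. c i \<noteq> 0" and zd: "jm z z = (\<Sum>i<n. d i *\<^sub>R c i)" and j: "j < n"
  shows "d j \<ge> 0"
proof (rule ccontr)
  assume neg: "\<not> d j \<ge> 0"
  define m where "m = d j"
  have m: "m < 0" using neg m_def by simp
  have o1: "\<forall>i<n. jm (c i) (c i) = c i" "\<forall>i<n. \<forall>j<n. i \<noteq> j \<longrightarrow> jm (c i) (c j) = 0"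
    using o by (auto simp: ofam_def)
  define a where "a = jm z z"
  have aPA: "a \<in> PA z" using PA_pw[of z 2] by (simp add: a_def pw2)
  define ls where "ls = sorted_list_of_set (d ` {..<n} - {m})"
  have sl: "set ls = d ` {..<n} - {m}" unfolding ls_def by simp
  define e where "e = Ev jm u a m ls"
  have ePA: "e \<in> PA z" unfolding e_def using Ev_PA aPA by simp
  have ee: "e = (\<Sum>i<n. (if d i = m then 1 else 0) *\<^sub>R c i)"
    unfolding e_def Ev_frame[OF o zd[folded a_def]]
    by (intro sum.cong) (auto simp: cf_zero cf_one sl)
  have eidem: "jm e e = e" unfolding ee fmul[OF o1] by (intro sum.cong) auto
  have ea: "jm e a = m *\<^sub>R e" unfolding ee zd[folded a_def] fmul[OF o1] scaleR_sum_right
    by (intro sum.cong) auto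
  have "jm (c j) e = c j" unfolding ee jm_single[OF o1 j] m_def by simp
  then have enz: "e \<noteq> 0" using nz j by auto
  have zPA: "z \<in> PA z" using PA_pw[of z 1] by simp
  define y where "y = jm e z"
  have yPA: "y \<in> PA z" unfolding y_def using PA_closed ePA zPA by simp
  have "jm y y = jm e (jm z (jm e z))" unfolding y_def using PA_assoc[OF ePA zPA yPA[unfolded y_def]] .
  also have "jm z (jm e z) = jm a e"
    using PA_assoc[OF zPA zPA ePA] comm[of e z] by (simp add: a_def)
  also have "jm e (jm a e) = jm e a"
    using PA_assoc[OF ePA ePA aPA] comm[of a e] eidem by simp
  finally have yy: "jm y y = m *\<^sub>R e" using ea by simp
  define w where "w = sqrt (- m) *\<^sub>R e"
  have "jm w w = (- m) *\<^sub>R e" unfolding w_def using m eidem by simp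
  then have "jm y y + jm w w = 0" using yy by simp
  then have "w = 0" by (rule freal2)
  then show False using m enz unfolding w_def by simp
qed


lemma ortho_bound:
  fixes e :: "nat \<Rightarrow> 'a"
  assumes id: "\<forall>i<m. jm (e i) (e i) = e i" and nz: "\<forall>i<m. e i \<noteq> 0"
    and orth: "\<forall>i<m. \<forall>j<m. i \<noteq> j \<longrightarrow> jm (e i) (e j) = 0"
  shows "m \<le> DIM('a)"
proof -
  have inj: "inj_on e {..<m}"
  proof (rule inj_onI)
    fix i j assume "i \<in> {..<m}" "j \<in> {..<m}" "e i = e j"
    then show "i = j" using id nz orth by (metis lessThan_iff)
  qed
  have ind: "independent (e ` {..<m})"
  proof
    assume "dependent (e ` {..<m})"
    then obtain c where c: "\<exists>v\<in>e ` {..<m}. c v \<noteq> 0" "(\<Sum>v\<in>e ` {..<m}. c v *\<^sub>R v) = 0"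
      using dependent_finite[of "e ` {..<m}"] by auto
    have s: "(\<Sum>i<m. c (e i) *\<^sub>R e i) = 0" using c(2) sum.reindex[OF inj, of "\<lambda>v. c v *\<^sub>R v"] by simp
    obtain j where j: "j < m" "c (e j) \<noteq> 0" using c(1) by auto
    have "jm (e j) (\<Sum>i<m. c (e i) *\<^sub>R e i) = c (e j) *\<^sub>R e j" by (rule jm_single[OF id orth j(1)])
    then show False using s j nz by simp
  qed
  have "card (e ` {..<m}) \<le> DIM('a)" using independent_bound[OF ind] by simp
  then show ?thesis using card_image[OF inj] by simp
qed

definition Qf :: "(nat \<Rightarrow> 'a) \<Rightarrow> nat \<Rightarrow> 'a \<Rightarrow> nat \<Rightarrow> (nat \<Rightarrow> 'a) \<Rightarrow> bool" where "Qf p k q m e \<longleftrightarrow> (\<forall>i<m. jm (e i) (e i) = e i \<and> e i \<noteq> 0)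
   \<and> (\<forall>i<m. \<forall>j<m. i \<noteq> j \<longrightarrow> jm (e i) (e j) = 0) \<and> (\<forall>i<m. \<forall>l<k. jm (e i) (p l) = 0)
   \<and> (\<Sum>i<m. e i) = q"

lemma split_prim:
  assumes Q: "Qf p k q m e" and i: "i < m" and pid: "\<forall>l<k. jm (p l) (p l) = p l"
    and a: "jm a a = a" "a \<noteq> 0" and b: "jm b b = b" "b \<noteq> 0" and ab: "jm a b = 0" and eab: "e i = a + b"
  shows "Qf p k q (Suc m) ((e(i := a))(m := b))"
proof -
  have ba: "jm b a = 0" using ab comm by metis
  have ea: "jm (e i) a = a" using eab a ba by simp
  have eb: "jm (e i) b = b" using eab b ab by simp
  have Q1: "\<forall>i<m. jm (e i) (e i) = e i \<and> e i \<noteq> 0" and Q2: "\<forall>i<m. \<forall>j<m. i \<noteq> j \<longrightarrow> jm (e i) (e j) = 0"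
    and Q3: "\<forall>i<m. \<forall>l<k. jm (e i) (p l) = 0" and Q4: "(\<Sum>i<m. e i) = q" using Q by (auto simp: Qf_def)
  have oa: "jm a (e j) = 0" if "j < m" "j \<noteq> i" for j
  proof -
    have "jm (e j) a = 0" by (rule peirceK[of "e i"]) (use Q1 Q2 i that ea in auto)
    then show ?thesis using comm by metis
  qed
  have ob: "jm b (e j) = 0" if "j < m" "j \<noteq> i" for j
  proof -
    have "jm (e j) b = 0" by (rule peirceK[of "e i"]) (use Q1 Q2 i that eb in auto)
    then show ?thesis using comm by metis
  qed
  have pa: "jm a (p l) = 0" if "l < k" for l
  proof -
    have "jm (p l) a = 0" by (rule peirceK[of "e i"]) (use Q1 Q3 pid i that ea in auto)
    then show ?thesis using comm by metis
  qed
  have pb: "jm b (p l) = 0" if "l < k" for l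
  proof -
    have "jm (p l) b = 0" by (rule peirceK[of "e i"]) (use Q1 Q3 pid i that eb in auto)
    then show ?thesis using comm by metis
  qed
  define e' where "e' = (e(i := a))(m := b)"
  have s1: "(\<Sum>j<m. e' j) = (\<Sum>j<m. e j) + (\<Sum>j<m. if j = i then a - e i else 0)"
    unfolding sum.distrib[symmetric] by (intro sum.cong) (auto simp: e'_def)
  have s: "(\<Sum>j<Suc m. e' j) = q"
  proof -
    have "e' m = b" by (simp add: e'_def)
    then have "(\<Sum>j<Suc m. e' j) = (\<Sum>j<m. e' j) + b" by simp
    also have "\<dots> = q" unfolding s1 using i Q4 eab by (simp add: sum.delta)
    finally show ?thesis .
  qed
  show ?thesis unfolding e'_def[symmetric] Qf_def
  proof (intro conjI allI impI)
    fix j assume "j < Suc m"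
    then show "jm (e' j) (e' j) = e' j" using Q1 a b by (auto simp: e'_def)
  next
    fix j assume "j < Suc m"
    then show "e' j \<noteq> 0" using Q1 a b by (auto simp: e'_def)
  next
    fix j j' assume "j < Suc m" "j' < Suc m" "j \<noteq> j'"
    then show "jm (e' j) (e' j') = 0"
      using Q2 oa ob ab ba comm i by (auto simp: e'_def less_Suc_eq)
  next
    fix j l assume "j < Suc m" "l < k"
    then show "jm (e' j) (p l) = 0" using Q3 pa pb by (auto simp: e'_def less_Suc_eq)
  next
    show "(\<Sum>j<Suc m. e' j) = q" by (rule s)
  qed
qed


end

context eja begin
lemma extend:
  fixes p :: "nat \<Rightarrow> 'a"
  assumes pr: "\<forall>i<k. primitive_idem jm (p i)" and po: "\<forall>i<k. \<forall>j<k. i \<noteq> j \<longrightarrow> jm (p i) (p j) = 0"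
  shows "\<exists>N c. k \<le> N \<and> jordan_frame jm u N c \<and> (\<forall>i<k. c i = p i)"
proof -
  have pid: "\<forall>l<k. jm (p l) (p l) = p l" using pr by (auto simp: primitive_idem_def idempotent_def)
  define q where "q = u - (\<Sum>i<k. p i)"
  have pq: "jm (p l) q = 0" if "l < k" for l
  proof -
    have "jm (p l) (\<Sum>i<k. 1 *\<^sub>R p i) = 1 *\<^sub>R p l" by (rule jm_single[OF pid po that])
    then have "jm (p l) (\<Sum>i<k. p i) = p l" by simp
    then show ?thesis unfolding q_def by simp
  qed
  have qp: "jm q (p l) = 0" if "l < k" for l using pq[OF that] comm[of q "p l"] by simp
  have qq: "jm q q = q"
  proof -
    have "jm q (\<Sum>i<k. p i) = 0" unfolding jm_sumr using qp by simp
    moreover have "jm q q = jm q (u - (\<Sum>i<k. p i))" using arg_cong[OF q_def, of "jm q"] .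
    ultimately show ?thesis by simp
  qed
  have ex: "\<exists>m e. Qf p k q m e"
  proof (cases "q = 0")
    case True
    then have "Qf p k q 0 (\<lambda>_. q)" by (simp add: Qf_def)
    then show ?thesis by blast
  next
    case False
    then have "Qf p k q 1 (\<lambda>_. q)" using qq qp by (simp add: Qf_def)
    then show ?thesis by blast
  qed
  have bnd: "\<forall>m. (\<exists>e. Qf p k q m e) \<longrightarrow> m \<le> DIM('a)"
  proof (intro allI impI)
    fix m assume "\<exists>e. Qf p k q m e"
    then obtain e where "Qf p k q m e" by blast
    then have "\<forall>i<m. jm (e i) (e i) = e i" "\<forall>i<m. e i \<noteq> 0" "\<forall>i<m. \<forall>j<m. i \<noteq> j \<longrightarrow> jm (e i) (e j) = 0"
      unfolding Qf_def by auto
    then show "m \<le> DIM('a)" by (rule ortho_bound)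
  qed
  define m where "m = (GREATEST m. \<exists>e. Qf p k q m e)"
  obtain m0 e0 where Q0: "Qf p k q m0 e0" using ex by blast
  have "\<exists>e. Qf p k q m e" unfolding m_def
    by (rule GreatestI_nat[where P="\<lambda>m. \<exists>e. Qf p k q m e", OF _ bnd[rule_format]]) (use Q0 in blast)
  then obtain e where Q: "Qf p k q m e" by blast
  have maxm: "\<And>m' e'. Qf p k q m' e' \<Longrightarrow> m' \<le> m" 
    unfolding m_def by (rule Greatest_le_nat[where P="\<lambda>m. \<exists>e. Qf p k q m e", OF _ bnd[rule_format]]) blast
  have eprim: "primitive_idem jm (e i)" if i: "i < m" for i
  proof -
    have "jm (e i) (e i) = e i" "e i \<noteq> 0" using Q i by (auto simp: Qf_def)
    moreover have "\<not> (\<exists>a b. idempotent jm a \<and> idempotent jm b \<and> a \<noteq> 0 \<and> b \<noteq> 0 \<and> jm a b = 0 \<and> e i = a + b)"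
    proof
      assume "\<exists>a b. idempotent jm a \<and> idempotent jm b \<and> a \<noteq> 0 \<and> b \<noteq> 0 \<and> jm a b = 0 \<and> e i = a + b"
      then obtain a b where "jm a a = a" "a \<noteq> 0" "jm b b = b" "b \<noteq> 0" "jm a b = 0" "e i = a + b"
        by (auto simp: idempotent_def)
      from split_prim[OF Q i pid this] have "Suc m \<le> m" by (rule maxm)
      then show False by simp
    qed
    ultimately show ?thesis by (simp add: primitive_idem_def idempotent_def)
  qed
  define c where "c i = (if i < k then p i else e (i - k))" for i
  have Qo: "\<forall>i<m. \<forall>j<m. i \<noteq> j \<longrightarrow> jm (e i) (e j) = 0" "\<forall>i<m. \<forall>l<k. jm (e i) (p l) = 0" "(\<Sum>i<m. e i) = q"
    using Q by (auto simp: Qf_def)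
  have sumc: "(\<Sum>i<k + n. c i) = (\<Sum>i<k. p i) + (\<Sum>i<n. e i)" for n
    by (induction n) (auto simp: c_def)
  have "jordan_frame jm u (k + m) c"
    unfolding jordan_frame_def
  proof (intro conjI allI impI)
    fix i assume "i < k + m"
    then show "primitive_idem jm (c i)" using pr eprim by (auto simp: c_def)
  next
    fix i j assume ij: "i < k + m" "j < k + m" "i \<noteq> j"
    show "jm (c i) (c j) = 0"
    proof (cases "i < k")
      case True
      show ?thesis
      proof (cases "j < k")
        case True
        then show ?thesis using \<open>i < k\<close> ij po by (simp add: c_def)
      next
        case False
        then have "j - k < m" using ij by simp
        then have "jm (e (j - k)) (p i) = 0" using Qo(2) \<open>i < k\<close> by simp
        then show ?thesis using \<open>i < k\<close> False comm by (simp add: c_def)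
      qed
    next
      case False
      then have im: "i - k < m" using ij by simp
      show ?thesis
      proof (cases "j < k")
        case True
        then show ?thesis using False im Qo(2) by (simp add: c_def)
      next
        case False2: False
        then have "j - k < m" "i - k \<noteq> j - k" using ij False by auto
        then show ?thesis using False False2 im Qo(1) by (simp add: c_def)
      qed
    qed
  next
    show "(\<Sum>i<k + m. c i) = u" using sumc[of m] Qo(3) by (simp add: q_def)
  qed
  then show ?thesis by (rule_tac x="k+m" in exI, rule_tac x=c in exI) (auto simp: c_def)
qed

end


lemma max_abs_Max:
  fixes f :: "nat \<Rightarrow> real"
  assumes "finite I" "I \<noteq> {}"
  shows "max (Max (f ` I)) (Max ((\<lambda>i. - f i) ` I)) = Max ((\<lambda>i. \<bar>f i\<bar>) ` I)"
proof (rule antisym)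
  have M: "\<bar>f i\<bar> \<le> Max ((\<lambda>i. \<bar>f i\<bar>) ` I)" if i: "i \<in> I" for i using assms i by (intro Max_ge) auto
  have "\<forall>i\<in>I. f i \<le> Max ((\<lambda>i. \<bar>f i\<bar>) ` I)" "\<forall>i\<in>I. - f i \<le> Max ((\<lambda>i. \<bar>f i\<bar>) ` I)"
    using M by (meson abs_ge_self abs_ge_minus_self order.trans)+
  then show "max (Max (f ` I)) (Max ((\<lambda>i. - f i) ` I)) \<le> Max ((\<lambda>i. \<bar>f i\<bar>) ` I)"
    using assms by (simp add: Max_le_iff)
next
  have "\<forall>i\<in>I. \<bar>f i\<bar> \<le> max (Max (f ` I)) (Max ((\<lambda>i. - f i) ` I))"
  proof
    fix i assume i: "i \<in> I"
    have "f i \<le> Max (f ` I)" "- f i \<le> Max ((\<lambda>i. - f i) ` I)" using assms i by auto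
    then show "\<bar>f i\<bar> \<le> max (Max (f ` I)) (Max ((\<lambda>i. - f i) ` I))" by linarith
  qed
  then show "Max ((\<lambda>i. \<bar>f i\<bar>) ` I) \<le> max (Max (f ` I)) (Max ((\<lambda>i. - f i) ` I))"
    using assms by (simp add: Max_le_iff)
qed

lemma Max_scale:
  fixes g :: "nat \<Rightarrow> real"
  assumes "finite I" "I \<noteq> {}" "c \<ge> 0"
  shows "Max ((\<lambda>i. c * g i) ` I) = c * Max (g ` I)"
proof -
  have "mono ((*) c)" using assms(3) by (auto intro: monoI mult_left_mono)
  then have "c * Max (g ` I) = Max ((*) c ` g ` I)" using assms by (intro mono_Max_commute) auto
  then show ?thesis by (simp add: image_image)
qed

context eja begin

lemma cone_iff:
  assumes o: "ofam jm u n c" and nz: "\<forall>i<n. c i \<noteq> 0"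
  shows "(\<Sum>i<n. r i *\<^sub>R c i) \<in> jcone jm \<longleftrightarrow> (\<forall>i<n. r i \<ge> 0)"
proof
  assume "(\<Sum>i<n. r i *\<^sub>R c i) \<in> jcone jm"
  then obtain z where "jm z z = (\<Sum>i<n. r i *\<^sub>R c i)" unfolding jcone_def jsq_def by auto
  then show "\<forall>i<n. r i \<ge> 0" using cone_frame[OF o nz] by blast
next
  assume r: "\<forall>i<n. r i \<ge> 0"
  have o1: "\<forall>i<n. jm (c i) (c i) = c i" "\<forall>i<n. \<forall>j<n. i \<noteq> j \<longrightarrow> jm (c i) (c j) = 0"
    using o by (auto simp: ofam_def)
  have "jsq jm (\<Sum>i<n. sqrt (r i) *\<^sub>R c i) = (\<Sum>i<n. r i *\<^sub>R c i)"
    unfolding jsq_def fmul[OF o1] using r by (intro sum.cong) auto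
  then show "(\<Sum>i<n. r i *\<^sub>R c i) \<in> jcone jm" unfolding jcone_def by (metis (mono_tags, lifting) mem_Collect_eq)
qed

lemma u_nz: "u \<noteq> 0"
proof
  assume "u = 0"
  then have "x = 0" for x :: 'a using unitl[of x] by simp
  moreover obtain b :: 'a where "b \<in> Basis" using nonempty_Basis by blast
  ultimately show False using nonzero_Basis by blast
qed

lemma frame_pos: "jordan_frame jm u N c \<Longrightarrow> N > 0"
  using u_nz unfolding jordan_frame_def by (cases N) auto

lemma lnM_frame:
  assumes fr: "jordan_frame jm u N c"
  shows "ln (Mfun jm (\<Sum>i<N. exp (a i) *\<^sub>R c i) (\<Sum>i<N. exp (b i) *\<^sub>R c i)) = Max ((\<lambda>i. a i - b i) ` {..<N})"
proof -
  define Mx where "Mx = Max ((\<lambda>i. a i - b i) ` {..<N})"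
  have N: "N > 0" using frame_pos[OF fr] .
  have o: "ofam jm u N c" using jf_ofam[OF fr] .
  have nz: "\<forall>i<N. c i \<noteq> 0" using fr by (auto simp: jordan_frame_def primitive_idem_def)
  have eqv: "\<beta> *\<^sub>R (\<Sum>i<N. exp (b i) *\<^sub>R c i) - (\<Sum>i<N. exp (a i) *\<^sub>R c i) = (\<Sum>i<N. (\<beta> * exp (b i) - exp (a i)) *\<^sub>R c i)" for \<beta>
    by (simp add: scaleR_sum_right sum_subtractf[symmetric] scaleR_diff_left)
  have set: "{\<beta>. jle jm (\<Sum>i<N. exp (a i) *\<^sub>R c i) (\<beta> *\<^sub>R (\<Sum>i<N. exp (b i) *\<^sub>R c i))} = {exp Mx..}"
  proof (intro set_eqI iffI)
    fix \<beta> assume "\<beta> \<in> {\<beta>. jle jm (\<Sum>i<N. exp (a i) *\<^sub>R c i) (\<beta> *\<^sub>R (\<Sum>i<N. exp (b i) *\<^sub>R c i))}"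
    then have "(\<Sum>i<N. (\<beta> * exp (b i) - exp (a i)) *\<^sub>R c i) \<in> jcone jm"
      unfolding jle_def eqv by simp
    then have r: "\<forall>i<N. \<beta> * exp (b i) - exp (a i) \<ge> 0" by (rule cone_iff[OF o nz, THEN iffD1])
    have "Mx \<in> (\<lambda>i. a i - b i) ` {..<N}" unfolding Mx_def using N by (intro Max_in) auto
    then obtain j where j: "j < N" "Mx = a j - b j" by auto
    have "exp Mx = exp (a j) / exp (b j)" using j by (simp add: exp_diff)
    also have "\<dots> \<le> \<beta>" using r j by (simp add: divide_le_eq)
    finally show "\<beta> \<in> {exp Mx..}" by simp
  next
    fix \<beta> assume "\<beta> \<in> {exp Mx..}"
    then have be: "exp Mx \<le> \<beta>" by simp
    have "\<forall>i<N. \<beta> * exp (b i) - exp (a i) \<ge> 0"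
    proof (intro allI impI)
      fix i assume i: "i < N"
      have "a i - b i \<le> Mx" unfolding Mx_def using i by (intro Max_ge) auto
      then have "exp (a i - b i) \<le> exp Mx" by simp
      then have "exp (a i) / exp (b i) \<le> \<beta>" using be by (simp add: exp_diff)
      then show "\<beta> * exp (b i) - exp (a i) \<ge> 0" by (simp add: divide_le_eq)
    qed
    then have "(\<Sum>i<N. (\<beta> * exp (b i) - exp (a i)) *\<^sub>R c i) \<in> jcone jm" by (rule cone_iff[OF o nz, THEN iffD2])
    then show "\<beta> \<in> {\<beta>. jle jm (\<Sum>i<N. exp (a i) *\<^sub>R c i) (\<beta> *\<^sub>R (\<Sum>i<N. exp (b i) *\<^sub>R c i))}"
      unfolding jle_def eqv by simp
  qed
  show ?thesis unfolding Mfun_def set Mx_def[symmetric] by simp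
qed

lemma iso_frame:
  assumes fr: "jordan_frame jm u N c"
  shows "dT jm (jexp jm u (\<Sum>i<N. a i *\<^sub>R c i)) (jexp jm u (\<Sum>i<N. b i *\<^sub>R c i))
       = unorm jm u ((\<Sum>i<N. a i *\<^sub>R c i) - (\<Sum>i<N. b i *\<^sub>R c i))"
proof -
  have N: "N > 0" using frame_pos[OF fr] .
  have d: "(\<Sum>i<N. a i *\<^sub>R c i) - (\<Sum>i<N. b i *\<^sub>R c i) = (\<Sum>i<N. (a i - b i) *\<^sub>R c i)"
    by (simp add: sum_subtractf[symmetric] scaleR_diff_left)
  have u: "unorm jm u ((\<Sum>i<N. a i *\<^sub>R c i) - (\<Sum>i<N. b i *\<^sub>R c i)) = Max ((\<lambda>i. \<bar>a i - b i\<bar>) ` {..<N})"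
    unfolding unorm_def d jspec_frame[OF fr refl] by (simp add: image_image)
  have "dT jm (jexp jm u (\<Sum>i<N. a i *\<^sub>R c i)) (jexp jm u (\<Sum>i<N. b i *\<^sub>R c i))
     = max (Max ((\<lambda>i. a i - b i) ` {..<N})) (Max ((\<lambda>i. b i - a i) ` {..<N}))"
    unfolding dT_def jexp_frame[OF fr refl] lnM_frame[OF fr] ..
  also have "\<dots> = Max ((\<lambda>i. \<bar>a i - b i\<bar>) ` {..<N})"
  proof -
    have "{..<N} \<noteq> {}" using N by auto
    then show ?thesis using max_abs_Max[of "{..<N}" "\<lambda>i. a i - b i"] by simp
  qed
  finally show ?thesis using u by simp
qed

lemma unorm_scale:
  assumes fr: "jordan_frame jm u N c"
  shows "unorm jm u (r *\<^sub>R (\<Sum>i<N. a i *\<^sub>R c i)) = \<bar>r\<bar> * unorm jm u (\<Sum>i<N. a i *\<^sub>R c i)"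
proof -
  have N: "N > 0" using frame_pos[OF fr] .
  have e: "r *\<^sub>R (\<Sum>i<N. a i *\<^sub>R c i) = (\<Sum>i<N. (r * a i) *\<^sub>R c i)" by (simp add: scaleR_sum_right)
  have "unorm jm u (r *\<^sub>R (\<Sum>i<N. a i *\<^sub>R c i)) = Max ((\<lambda>i. \<bar>r\<bar> * \<bar>a i\<bar>) ` {..<N})"
    unfolding e unorm_def jspec_frame[OF fr refl] by (simp add: image_image abs_mult)
  also have "\<dots> = \<bar>r\<bar> * Max ((\<lambda>i. \<bar>a i\<bar>) ` {..<N})" using N by (intro Max_scale) auto
  also have "Max ((\<lambda>i. \<bar>a i\<bar>) ` {..<N}) = unorm jm u (\<Sum>i<N. a i *\<^sub>R c i)"
    unfolding unorm_def jspec_frame[OF fr refl] by (simp add: image_image)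
  finally show ?thesis .
qed

lemma span_rep:
  fixes p :: "nat \<Rightarrow> 'a"
  assumes "x \<in> span (p ` {..<k})"
  shows "\<exists>\<alpha>. x = (\<Sum>i<k. \<alpha> i *\<^sub>R p i)"
  using assms
proof (induction x rule: span_induct_alt)
  case base
  then show ?case by (rule_tac x="\<lambda>_. 0" in exI) simp
next
  case (step r x y)
  then obtain \<alpha> j where y: "y = (\<Sum>i<k. \<alpha> i *\<^sub>R p i)" and j: "j < k" "x = p j" by auto
  have "r *\<^sub>R x + y = (\<Sum>i<k. (\<alpha> i + (if i = j then r else 0)) *\<^sub>R p i)"
  proof -
    have "(\<Sum>i<k. (if i = j then r else 0) *\<^sub>R p i) = (\<Sum>i<k. if i = j then r *\<^sub>R p i else 0)"
      by (intro sum.cong) auto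
    also have "\<dots> = r *\<^sub>R p j" using j by (subst sum.delta) auto
    finally show ?thesis using y j by (simp add: scaleR_add_left sum.distrib)
  qed
  then show ?case by (rule exI[of _ "\<lambda>i. \<alpha> i + (if i = j then r else 0)"])
qed

lemma frame_rep:
  fixes p c :: "nat \<Rightarrow> 'a"
  assumes "k \<le> N" "\<forall>i<k. c i = p i"
  shows "(\<Sum>i<k. \<alpha> i *\<^sub>R p i) = (\<Sum>i<N. (if i < k then \<alpha> i else 0) *\<^sub>R c i)"
proof -
  have "(\<Sum>i<N. (if i < k then \<alpha> i else 0) *\<^sub>R c i) = (\<Sum>i<N. if i \<in> {..<k} then \<alpha> i *\<^sub>R c i else 0)"
    by (intro sum.cong) auto
  also have "\<dots> = (\<Sum>i\<in>{..<N} \<inter> {..<k}. \<alpha> i *\<^sub>R c i)" by (rule sum.inter_restrict[symmetric]) simp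
  also have "{..<N} \<inter> {..<k} = {..<k}" using assms(1) by auto
  also have "(\<Sum>i<k. \<alpha> i *\<^sub>R c i) = (\<Sum>i<k. \<alpha> i *\<^sub>R p i)" using assms(2) by simp
  finally show ?thesis by simp
qed

end

theorem lemma3p1:
  fixes jm :: "'a::euclidean_space \<Rightarrow> 'a \<Rightarrow> 'a" and u :: 'a
    and p :: "nat \<Rightarrow> 'a" and k :: nat
  assumes "EJA jm u"
    and "\<forall>i<k. primitive_idem jm (p i)"
    and "\<forall>i<k. \<forall>j<k. i \<noteq> j \<longrightarrow> jm (p i) (p j) = 0"
  shows "(\<forall>x\<in>span (p ` {..<k}). \<forall>y\<in>span (p ` {..<k}).
            dT jm (jexp jm u x) (jexp jm u y) = unorm jm u (x - y))
       \<and> (\<forall>x\<in>span (p ` {..<k}). \<forall>w\<in>span (p ` {..<k}). unorm jm u w = 1 \<longrightarrow>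
            (\<forall>s t::real. dT jm (jexp jm u (t *\<^sub>R w + x)) (jexp jm u (s *\<^sub>R w + x)) = \<bar>t - s\<bar>))"
proof -
  interpret eja jm u by (rule eja.intro) (rule assms(1))
  obtain N c where N: "k \<le> N" and fr: "jordan_frame jm u N c" and cp: "\<forall>i<k. c i = p i"
    using extend[OF assms(2,3)] by blast
  have rep: "\<exists>a. x = (\<Sum>i<N. a i *\<^sub>R c i)" if xs: "x \<in> span (p ` {..<k})" for x
  proof -
    obtain \<alpha> where "x = (\<Sum>i<k. \<alpha> i *\<^sub>R p i)" using span_rep[OF xs] by blast
    then show ?thesis using frame_rep[OF N cp, of \<alpha>] by (intro exI[of _ "\<lambda>i. if i < k then \<alpha> i else 0"]) simp
  qed
  have iso: "dT jm (jexp jm u x) (jexp jm u y) = unorm jm u (x - y)"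
    if xy: "x \<in> span (p ` {..<k})" "y \<in> span (p ` {..<k})" for x y
  proof -
    obtain a where a: "x = (\<Sum>i<N. a i *\<^sub>R c i)" using rep[OF xy(1)] by blast
    obtain b where b: "y = (\<Sum>i<N. b i *\<^sub>R c i)" using rep[OF xy(2)] by blast
    from a b show ?thesis using iso_frame[OF fr] by simp
  qed
  show ?thesis
  proof (intro conjI ballI allI impI)
    fix x y assume "x \<in> span (p ` {..<k})" "y \<in> span (p ` {..<k})"
    then show "dT jm (jexp jm u x) (jexp jm u y) = unorm jm u (x - y)" by (rule iso)
  next
    fix x w s t assume x: "x \<in> span (p ` {..<k})" and w: "w \<in> span (p ` {..<k})" and w1: "unorm jm u w = 1"
    have tw: "t *\<^sub>R w + x \<in> span (p ` {..<k})" "s *\<^sub>R w + x \<in> span (p ` {..<k})"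
      using x w by (auto intro: span_add span_scale)
    have "(t *\<^sub>R w + x) - (s *\<^sub>R w + x) = (t - s) *\<^sub>R w" by (simp add: algebra_simps)
    then have "dT jm (jexp jm u (t *\<^sub>R w + x)) (jexp jm u (s *\<^sub>R w + x)) = unorm jm u ((t - s) *\<^sub>R w)"
      using iso[OF tw] by simp
    also obtain a where "w = (\<Sum>i<N. a i *\<^sub>R c i)" using rep[OF w] by blast
    then have "unorm jm u ((t - s) *\<^sub>R w) = \<bar>t - s\<bar> * unorm jm u w" using unorm_scale[OF fr] by simp
    finally show "dT jm (jexp jm u (t *\<^sub>R w + x)) (jexp jm u (s *\<^sub>R w + x)) = \<bar>t - s\<bar>" using w1 by simp
  qed
qed

end
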